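(* Let $\gamma_{\rm th}>0$ and let $P_O(P_j)=\mathbb{P}(\gamma_{k'}<\gamma_{\rm th})$ where $\gamma_{k'}=\dfrac{P_jD_{jk}^{-\beta_k}|h_{jk}|^2}{P_I\sum_{i=1}^N|g_{k,i}|^2}$. Then as $P_j\to\infty$, $$P_O(P_j)\sim\frac{(\gamma_{\rm th}\eta_kP_I)^{\frac{\alpha\mu}{2}}}{\mu\left(P_jD_{jk}^{-\beta_k}\beta\right)^{\frac{\alpha\mu}{2}}\Gamma(N)\Gamma(\mu)}\,\Gamma\!\left(\frac{\alpha\mu}{2}+N\right),$$ i.e. the ratio of the two sides tends to $1$.
   Context: Let $\alpha>0$, $\mu>0$, $\bar\Upsilon>0$ and set $\beta=\bar\Upsilon\,\Gamma(\mu)/\Gamma(\mu+2/\alpha)$. Let $|h_{jk}|^2$ be a random variable with density $f_{|h_{jk}|^2}(x)=\frac{\alpha x^{\alpha\mu/2-1}}{2\beta^{\alpha\mu/2}\Gamma(\mu)}\exp\!\big(-(x/\beta)^{\alpha/2}\big)$, $x>0$. Let $N\ge1$ be an integer and $|g_{k,1}|^2,\dots,|g_{k,N}|^2$ be i.i.d. exponential random variables with mean $\eta_k>0$, independent of $h_{jk}$. Let $P_I,D_{jk},\beta_k>0$ be fixed and $P_j>0$ vary. *)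

theory Defs
  imports "HOL-Probability.Probability" "HOL-Library.Landau_Symbols"
begin

definition amu_beta :: "real \<Rightarrow> real \<Rightarrow> real \<Rightarrow> real" where
  "amu_beta alpha mu Ups = Ups * Gamma mu / Gamma (mu + 2 / alpha)"

text \<open>Density of |h_jk|^2 (alpha-mu fading power), zero for x <= 0.\<close>
definition amu_density :: "real \<Rightarrow> real \<Rightarrow> real \<Rightarrow> real \<Rightarrow> real" where
  "amu_density alpha mu Ups x =
     (if x > 0 then
        alpha * x powr (alpha * mu / 2 - 1)
          / (2 * (amu_beta alpha mu Ups) powr (alpha * mu / 2) * Gamma mu)
          * exp (- ((x / amu_beta alpha mu Ups) powr (alpha / 2)))
      else 0)"

end

theory Submission
  imports Defs
begin

lemma nn_int_powr:
  fixes a z :: real assumes "a > 0" "z \<ge> 0"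
  shows "(\<integral>\<^sup>+x. ennreal (x powr (a-1)) * indicator {0..z} x \<partial>lborel) = ennreal (z powr a / a)"
proof -
  have "((\<lambda>x. x powr (a-1)) has_integral (z powr (a-1+1) / (a-1+1))) {0..z}"
    by (rule has_integral_powr_from_0) (use assms in auto)
  then have "((\<lambda>x. x powr (a-1)) has_integral (z powr a / a)) {0..z}" by simp
  from nn_integral_has_integral_lebesgue'[OF _ this] show ?thesis by auto
qed

lemma amu_beta_pos: "alpha > 0 \<Longrightarrow> mu > 0 \<Longrightarrow> Ups > 0 \<Longrightarrow> amu_beta alpha mu Ups > 0"
  unfolding amu_beta_def by (intro divide_pos_pos mult_pos_pos Gamma_real_pos add_pos_pos) auto

lemma amu_density_nonneg: "alpha > 0 \<Longrightarrow> mu > 0 \<Longrightarrow> Ups > 0 \<Longrightarrow> amu_density alpha mu Ups x \<ge> 0"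
  unfolding amu_density_def using amu_beta_pos[of alpha mu Ups] Gamma_real_pos[of mu]
  by (auto intro!: mult_nonneg_nonneg divide_nonneg_pos)

lemma amu_density_measurable[measurable]: "amu_density alpha mu Ups \<in> borel_measurable borel"
  unfolding amu_density_def[abs_def] by measurable

lemma amu_cdf_bounds:
  fixes alpha mu Ups z :: real
  assumes al: "alpha > 0" and mu: "mu > 0" and U: "Ups > 0" and z: "z > 0"
  shows "emeasure (density lborel (\<lambda>x. ennreal (amu_density alpha mu Ups x))) {..<z}
           \<le> ennreal (z powr (alpha*mu/2) / (mu * amu_beta alpha mu Ups powr (alpha*mu/2) * Gamma mu))"
    and "ennreal (exp (-((z / amu_beta alpha mu Ups) powr (alpha/2))) *
             (z powr (alpha*mu/2) / (mu * amu_beta alpha mu Ups powr (alpha*mu/2) * Gamma mu)))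
           \<le> emeasure (density lborel (\<lambda>x. ennreal (amu_density alpha mu Ups x))) {..<z}"
proof -
  define b where "b = amu_beta alpha mu Ups"
  define a where "a = alpha*mu/2"
  define A where "A = alpha / (2 * b powr a * Gamma mu)"
  define E where "E = exp (-((z / b) powr (alpha/2)))"
  have b: "b > 0" unfolding b_def using amu_beta_pos al mu U by blast
  have a: "a > 0" unfolding a_def using al mu by simp
  have A: "A > 0" unfolding A_def using b al Gamma_real_pos[OF mu] by simp
  have E: "E > 0" "E \<le> 1" unfolding E_def by auto
  have dens: "amu_density alpha mu Ups x = (if x > 0 then A * x powr (a-1) * exp (-((x/b) powr (alpha/2))) else 0)" for x
    unfolding amu_density_def A_def a_def b_def by simp
  have eqC: "A * (z powr a / a) = z powr a / (mu * b powr a * Gamma mu)"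
    unfolding A_def a_def using al mu by (simp add: field_simps)
  have em: "emeasure (density lborel (\<lambda>x. ennreal (amu_density alpha mu Ups x))) {..<z}
      = (\<integral>\<^sup>+x. ennreal (amu_density alpha mu Ups x) * indicator {..<z} x \<partial>lborel)"
    by (rule emeasure_density) auto
  have I: "(\<integral>\<^sup>+x. ennreal c * (ennreal (x powr (a-1)) * indicator {0..z} x) \<partial>lborel) = ennreal (c * (z powr a / a))"
    if "c \<ge> 0" for c
    using that a z by (subst nn_integral_cmult) (auto simp: nn_int_powr ennreal_mult'[symmetric])
  have "(\<integral>\<^sup>+x. ennreal (amu_density alpha mu Ups x) * indicator {..<z} x \<partial>lborel)
        \<le> (\<integral>\<^sup>+x. ennreal A * (ennreal (x powr (a-1)) * indicator {0..z} x) \<partial>lborel)"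
  proof (rule nn_integral_mono)
    fix x :: real
    show "ennreal (amu_density alpha mu Ups x) * indicator {..<z} x
          \<le> ennreal A * (ennreal (x powr (a-1)) * indicator {0..z} x)"
    proof (cases "x > 0 \<and> x < z")
      case True
      then have "amu_density alpha mu Ups x \<le> A * x powr (a-1)"
        unfolding dens using A by (auto intro!: mult_left_le)
      with True A show ?thesis by (auto simp: ennreal_mult[symmetric] indicator_def)
    next
      case False
      then show ?thesis by (auto simp: dens indicator_def)
    qed
  qed
  then show "emeasure (density lborel (\<lambda>x. ennreal (amu_density alpha mu Ups x))) {..<z}
           \<le> ennreal (z powr (alpha*mu/2) / (mu * amu_beta alpha mu Ups powr (alpha*mu/2) * Gamma mu))"
    using I[of A] A eqC unfolding em a_def b_def by simp
  have "(\<integral>\<^sup>+x. ennreal (E*A) * (ennreal (x powr (a-1)) * indicator {0..z} x) \<partial>lborel)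
        \<le> (\<integral>\<^sup>+x. ennreal (amu_density alpha mu Ups x) * indicator {..<z} x \<partial>lborel)"
  proof (rule nn_integral_mono_AE)
    show "AE x in lborel. ennreal (E*A) * (ennreal (x powr (a-1)) * indicator {0..z} x)
          \<le> ennreal (amu_density alpha mu Ups x) * indicator {..<z} x"
      using AE_lborel_singleton[of z]
    proof eventually_elim
      fix x :: real assume xz: "x \<noteq> z"
      show "ennreal (E*A) * (ennreal (x powr (a-1)) * indicator {0..z} x)
          \<le> ennreal (amu_density alpha mu Ups x) * indicator {..<z} x"
      proof (cases "x > 0 \<and> x < z")
        case True
        have "(x/b) powr (alpha/2) \<le> (z/b) powr (alpha/2)"
          using True b al by (intro powr_mono2) (auto simp: divide_right_mono)
        then have "E \<le> exp (-((x/b) powr (alpha/2)))" unfolding E_def by simp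
        then have "E * A * x powr (a-1) \<le> amu_density alpha mu Ups x"
          unfolding dens using True A by (simp add: mult_right_mono mult.commute mult.left_commute)
        with True A E show ?thesis by (auto simp: ennreal_mult[symmetric] indicator_def intro!: ennreal_leI)
      next
        case False
        with xz show ?thesis by (auto simp: dens indicator_def)
      qed
    qed
  qed
  then show "ennreal (exp (-((z / amu_beta alpha mu Ups) powr (alpha/2))) *
             (z powr (alpha*mu/2) / (mu * amu_beta alpha mu Ups powr (alpha*mu/2) * Gamma mu)))
           \<le> emeasure (density lborel (\<lambda>x. ennreal (amu_density alpha mu Ups x))) {..<z}"
  proof -
    have "ennreal (E*A*(z powr a/a)) \<le> emeasure (density lborel (\<lambda>x. ennreal (amu_density alpha mu Ups x))) {..<z}"
      using I[of "E*A"] A E em \<open>(\<integral>\<^sup>+x. ennreal (E*A) * _ \<partial>lborel) \<le> _\<close> by simp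
    moreover have "E*A*(z powr a/a) = E * (z powr a / (mu * b powr a * Gamma mu))" using eqC by (metis times_divide_eq_right mult.assoc)
    ultimately show ?thesis unfolding a_def b_def E_def by simp
  qed
qed


lemma erlang_moment_powr:
  fixes l a :: real and N :: nat
  assumes l: "l > 0" and a: "a > 0" and N: "N \<ge> 1"
  shows "(\<integral>\<^sup>+y. ennreal (erlang_density (N-1) l y) * ennreal (y powr a) \<partial>lborel)
         = ennreal (Gamma (real N + a) / (Gamma (real N) * l powr a))"
proof -
  define s where "s = real N + a"
  have s: "s > 0" unfolding s_def using a by simp
  define K where "K = l ^ N / fact (N-1) / l powr (s - 1)"
  have K: "K > 0" unfolding K_def using l by simp
  have pt: "ennreal (erlang_density (N-1) l y) * ennreal (y powr a)
      = ennreal K * ennreal (indicator {0..} (l*y) * (l*y) powr (s - 1) / exp (l*y))" for y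
  proof (cases "y > 0")
    case True
    have e1: "y ^ (N-1) * y powr a = y powr (s - 1)"
      using True N by (simp add: s_def powr_realpow[symmetric] powr_add[symmetric] of_nat_diff algebra_simps)
    have e2: "(l*y) powr (s-1) = l powr (s-1) * y powr (s-1)"
      using True l by (simp add: powr_mult)
    have "erlang_density (N-1) l y * y powr a = K * (indicator {0..} (l*y) * (l*y) powr (s - 1) / exp (l*y))"
      using True N l unfolding erlang_density_def K_def e2
      by (simp add: e1[symmetric] exp_minus field_simps)
    then show ?thesis using True l K by (simp add: ennreal_mult[symmetric])
  next
    case False
    then show ?thesis using l by (cases "y = 0") (auto simp: erlang_density_def indicator_def mult_le_0_iff zero_le_mult_iff)
  qed
  have G: "ennreal (Gamma s) = ennreal l * (\<integral>\<^sup>+y. ennreal (indicator {0..} (l*y) * (l*y) powr (s - 1) / exp (l*y)) \<partial>lborel)"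
    using Gamma_conv_nn_integral_real[OF s] l
    by (subst (asm) nn_integral_real_affine[where c = l and t = 0]) auto
  have "(\<integral>\<^sup>+y. ennreal (erlang_density (N-1) l y) * ennreal (y powr a) \<partial>lborel)
       = ennreal K * (\<integral>\<^sup>+y. ennreal (indicator {0..} (l*y) * (l*y) powr (s - 1) / exp (l*y)) \<partial>lborel)"
    unfolding pt by (rule nn_integral_cmult) measurable
  also have "(\<integral>\<^sup>+y. ennreal (indicator {0..} (l*y) * (l*y) powr (s - 1) / exp (l*y)) \<partial>lborel) = ennreal (Gamma s / l)"
  proof -
    define X where "X = (\<integral>\<^sup>+y. ennreal (indicator {0..} (l*y) * (l*y) powr (s - 1) / exp (l*y)) \<partial>lborel)"
    have "ennreal (Gamma s / l) = ennreal (1/l) * ennreal (Gamma s)"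
      using l Gamma_real_pos[OF s] by (simp add: ennreal_mult[symmetric])
    also have "\<dots> = ennreal (1/l) * ennreal l * X" using G unfolding X_def by (simp add: mult.assoc)
    also have "\<dots> = X" using l by (simp add: ennreal_mult[symmetric])
    finally show ?thesis unfolding X_def by simp
  qed
  also have "ennreal K * ennreal (Gamma s / l) = ennreal (K * Gamma s / l)"
    using K l Gamma_real_pos[OF s] by (subst ennreal_mult[symmetric]) auto
  also have "K * Gamma s / l = Gamma (real N + a) / (Gamma (real N) * l powr a)"
  proof -
    have "Gamma (real N) = fact (N-1)"
      using Gamma_fact[of "N-1"] N by (simp add: of_nat_diff)
    moreover have "l powr (s - 1) * l = l ^ N * l powr a"
      using l N by (simp add: s_def powr_add powr_realpow[symmetric] powr_diff)
    ultimately show ?thesis unfolding K_def s_def using l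
      by (simp add: field_simps)
  qed
  finally show ?thesis .
qed


lemma sandwich_lim:
  fixes F e :: "real \<Rightarrow> real" and a C :: real
  assumes "\<And>z. z > 0 \<Longrightarrow> e z * (C * z powr a) \<le> F z \<and> F z \<le> C * z powr a"
    and "(e \<longlongrightarrow> 1) (at_right 0)"
  shows "((\<lambda>z. F z / z powr a) \<longlongrightarrow> C) (at_right 0)"
proof (rule tendsto_sandwich[where f = "\<lambda>z. e z * C" and h = "\<lambda>_. C"])
  have ev: "eventually (\<lambda>z. z > (0::real)) (at_right 0)" by (simp add: eventually_at_right_less)
  show "eventually (\<lambda>z. e z * C \<le> F z / z powr a) (at_right 0)"
    using ev by eventually_elim (use assms(1) in \<open>auto simp: field_simps\<close>)
  show "eventually (\<lambda>z. F z / z powr a \<le> C) (at_right 0)"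
    using ev by eventually_elim (use assms(1) in \<open>auto simp: field_simps\<close>)
  show "((\<lambda>z. e z * C) \<longlongrightarrow> C) (at_right 0)"
    using tendsto_mult[OF assms(2) tendsto_const[of C]] by simp
qed simp

lemma exp_lim:
  fixes b c :: real assumes "b > 0" "c > 0"
  shows "((\<lambda>z. exp (-((z/b) powr c))) \<longlongrightarrow> 1) (at_right 0)"
proof -
  have "((\<lambda>z::real. z/b) \<longlongrightarrow> 0) (at_right 0)"
    using assms by (intro tendsto_eq_intros) (auto intro: tendsto_ident_at)
  then have "((\<lambda>z::real. (z/b) powr c) \<longlongrightarrow> 0) (at_right 0)"
    by (rule tendsto_zero_powrI[OF _ tendsto_const])
       (use assms in \<open>auto simp: eventually_at_right_less eventually_at_right_field intro: exI[of _ 1]\<close>)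
  then have "((\<lambda>z::real. exp (-((z/b) powr c))) \<longlongrightarrow> exp (-0)) (at_right 0)"
    by (intro tendsto_intros)
  then show ?thesis by simp
qed

lemma lim_c_div:
  fixes c :: real assumes "c > 0"
  shows "filterlim (\<lambda>x. c / x) (at_right 0) at_top"
proof -
  have "((\<lambda>x::real. c / x) \<longlongrightarrow> 0) at_top"
    by (intro tendsto_divide_0[OF tendsto_const] filterlim_ident filterlim_at_top_imp_at_infinity)
  moreover have "eventually (\<lambda>x::real. c / x \<in> {0<..} \<and> c / x \<noteq> 0) at_top"
    using eventually_gt_at_top[of 0] by eventually_elim (use assms in auto)
  ultimately show ?thesis by (simp add: filterlim_at)
qed


theorem mainTheorem5:
  fixes M :: "'a measure"
    and H :: "'a \<Rightarrow> real"
    and G :: "nat \<Rightarrow> 'a \<Rightarrow> real"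
    and alpha mu Ups eta PI D betak gth :: real
    and N :: nat
  assumes "prob_space M"
    and "alpha > 0" and "mu > 0" and "Ups > 0" and "eta > 0"
    and "PI > 0" and "D > 0" and "betak > 0" and "gth > 0"
    and "N \<ge> 1"
    and "distributed M lborel H (\<lambda>x. ennreal (amu_density alpha mu Ups x))"
    and "\<And>i. i \<in> {1..N} \<Longrightarrow> distributed M lborel (G i) (\<lambda>x. ennreal (exponential_density (1 / eta) x))"
    and "prob_space.indep_vars M (\<lambda>_. borel) (\<lambda>i. if i = 0 then H else G i) {0..N}"
  shows "(\<lambda>Pj. measure M {\<omega> \<in> space M.
              Pj * D powr (- betak) * H \<omega> / (PI * (\<Sum>i=1..N. G i \<omega>)) < gth})
         \<sim>[at_top]
         (\<lambda>Pj. (gth * eta * PI) powr (alpha * mu / 2)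
               / (mu * (Pj * D powr (- betak) * amu_beta alpha mu Ups) powr (alpha * mu / 2)
                  * Gamma (real N) * Gamma mu)
               * Gamma (alpha * mu / 2 + real N))"
proof -
  interpret P: prob_space M by fact
  note al = assms(2) and mu = assms(3) and U = assms(4) and eta = assms(5) and PI = assms(6)
    and D = assms(7) and gth = assms(9) and N = assms(10) and distH = assms(11) and distG = assms(12)
  define a where "a = alpha*mu/2"
  define b where "b = amu_beta alpha mu Ups"
  define c where "c = D powr (- betak)"
  define C where "C = 1 / (mu * b powr a * Gamma mu)"
  define k where "k = gth * PI / c"
  define S where "S = (\<lambda>\<omega>. \<Sum>i=1..N. G i \<omega>)"
  define X where "X = (\<lambda>i. if i = 0 then H else G i)"
  define dH where "dH = distr M borel H"
  define FH where "FH = (\<lambda>z. measure dH {..<z})"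
  define V where "V = Gamma (real N + a) / (Gamma (real N) * (1/eta) powr a)"
  define L where "L = C * k powr a * V"
  have a: "a > 0" unfolding a_def using al mu by simp
  have b: "b > 0" unfolding b_def using amu_beta_pos al mu U by blast
  have c: "c > 0" unfolding c_def using D by simp
  have C: "C > 0" unfolding C_def using b mu Gamma_real_pos[OF mu] by simp
  have k: "k > 0" unfolding k_def using gth PI c by simp
  have V: "V > 0" unfolding V_def using N a eta by (auto intro!: divide_pos_pos mult_pos_pos Gamma_real_pos)
  have L: "L > 0" unfolding L_def using C k V by simp
  have indep: "P.indep_vars (\<lambda>_. borel) X {0..N}" using assms(13) unfolding X_def .
  have indSH: "P.indep_var borel S borel H"
  proof -
    have "P.indep_var borel ((\<lambda>f. \<Sum>i\<in>{1..N}. f i) \<circ> (\<lambda>\<omega>. restrict (\<lambda>i. X i \<omega>) {1..N}))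
                      borel ((\<lambda>f. f 0) \<circ> (\<lambda>\<omega>. restrict (\<lambda>i. X i \<omega>) {0}))"
      by (intro P.indep_var_compose[OF P.indep_var_restrict[OF indep]]) auto
    also have "(\<lambda>f. \<Sum>i\<in>{1..N}. f i) \<circ> (\<lambda>\<omega>. restrict (\<lambda>i. X i \<omega>) {1..N}) = S"
      by (auto simp: S_def X_def fun_eq_iff intro!: sum.cong)
    also have "(\<lambda>f. f 0) \<circ> (\<lambda>\<omega>. restrict (\<lambda>i. X i \<omega>) {0}) = H" by (auto simp: X_def)
    finally show ?thesis .
  qed
  have "distributed M lborel (\<lambda>x. \<Sum>i\<in>{1..N}. X i x) (erlang_density (card {1..N} - 1) (1/eta))"
    by (rule P.exponential_distributed_sum) (use N in \<open>auto simp: X_def distG eta intro: P.indep_vars_subset[OF indep[unfolded X_def]]\<close>)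
  moreover have "(\<lambda>x. \<Sum>i\<in>{1..N}. X i x) = S" by (auto simp: fun_eq_iff S_def X_def intro!: sum.cong)
  ultimately have distS: "distributed M lborel S (erlang_density (N-1) (1/eta))" by simp
  have Smeas[measurable]: "S \<in> borel_measurable M"
    using distributed_measurable[OF distS] by simp
  have Hmeas[measurable]: "H \<in> borel_measurable M"
    using distributed_measurable[OF distH] by simp
  have AES: "AE \<omega> in M. S \<omega> > 0"
  proof -
    have "AE x in density lborel (\<lambda>x. ennreal (erlang_density (N-1) (1/eta) x)). x > 0"
      using AE_lborel_singleton[of 0]
      by (subst AE_density) (auto elim!: eventually_mono simp: erlang_density_def)
    then have "AE x in distr M lborel S. x > 0"
      using distributed_distr_eq_density[OF distS] by metis
    from AE_distrD[OF _ this] show ?thesis by simp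
  qed
  have dH_eq: "dH = density lborel (\<lambda>x. ennreal (amu_density alpha mu Ups x))"
  proof -
    have "dH = distr M lborel H" unfolding dH_def by (rule distr_cong) auto
    then show ?thesis using distributed_distr_eq_density[OF distH] by simp
  qed
  interpret dH: prob_space dH unfolding dH_def by (rule P.prob_space_distr) simp
  have FH_em: "emeasure dH {..<z} = ennreal (FH z)" for z
    unfolding FH_def by (simp add: dH.emeasure_eq_measure)
  have FH_nonneg: "FH z \<ge> 0" for z unfolding FH_def by simp
  have FH_bounds: "exp (-((z/b) powr (alpha/2))) * (C * z powr a) \<le> FH z \<and> FH z \<le> C * z powr a" if "z > 0" for z
  proof -
    note bd = amu_cdf_bounds[OF al mu U that]
    have "ennreal (FH z) \<le> ennreal (C * z powr a)"
      using bd(1) FH_em[of z] unfolding dH_eq C_def a_def b_def by simp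
    moreover have "ennreal (exp (-((z/b) powr (alpha/2))) * (C * z powr a)) \<le> ennreal (FH z)"
      using bd(2) FH_em[of z] unfolding dH_eq C_def a_def b_def by simp
    moreover have "C * z powr a > 0" using C that by simp
    ultimately show ?thesis using FH_nonneg[of z] by (auto simp: ennreal_le_iff2)
  qed
  have FH_mono: "mono FH" unfolding FH_def mono_def
  proof (intro allI impI)
    fix x y :: real assume "x \<le> y"
    then show "measure dH {..<x} \<le> measure dH {..<y}"
      by (intro dH.finite_measure_mono) (auto simp: dH_def)
  qed
  have FH_meas[measurable]: "FH \<in> borel_measurable borel" using FH_mono by (rule borel_measurable_mono)
  have Q_eq: "measure M {\<omega> \<in> space M. Pj * c * H \<omega> / (PI * S \<omega>) < gth} = (\<integral>\<omega>. FH (k * S \<omega> / Pj) \<partial>M)"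
    if Pj: "Pj > 0" for Pj
  proof -
    define A where "A = {p::real\<times>real. Pj * c * snd p / (PI * fst p) < gth}"
    have A_sets: "A \<in> sets (borel \<Otimes>\<^sub>M borel)"
    proof -
      have "A = {p \<in> space (borel \<Otimes>\<^sub>M borel). Pj * c * snd p / (PI * fst p) < gth}"
        by (auto simp: A_def space_pair_measure)
      also have "\<dots> \<in> sets (borel \<Otimes>\<^sub>M borel)" by measurable
      finally show ?thesis .
    qed
    have sets_eq: "sets (distr M borel S \<Otimes>\<^sub>M dH) = sets (borel \<Otimes>\<^sub>M borel)"
      by (intro sets_pair_measure_cong) (auto simp: dH_def)
    have sets_eq2: "sets (borel \<Otimes>\<^sub>M dH) = sets (borel \<Otimes>\<^sub>M borel)"
      by (intro sets_pair_measure_cong) (auto simp: dH_def)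
    have SH_meas: "(\<lambda>\<omega>. (S \<omega>, H \<omega>)) \<in> measurable M (borel \<Otimes>\<^sub>M borel)" by measurable
    have "emeasure M {\<omega> \<in> space M. Pj * c * H \<omega> / (PI * S \<omega>) < gth} = emeasure M ((\<lambda>\<omega>. (S \<omega>, H \<omega>)) -` A \<inter> space M)"
      by (rule arg_cong[where f="emeasure M"]) (auto simp: A_def)
    also have "\<dots> = emeasure (distr M (borel \<Otimes>\<^sub>M borel) (\<lambda>\<omega>. (S \<omega>, H \<omega>))) A"
      by (rule emeasure_distr[symmetric]) (fact SH_meas, fact A_sets)
    also have "distr M (borel \<Otimes>\<^sub>M borel) (\<lambda>\<omega>. (S \<omega>, H \<omega>)) = distr M borel S \<Otimes>\<^sub>M dH"
      using indSH unfolding P.indep_var_distribution_eq dH_def by simp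
    also have "emeasure (distr M borel S \<Otimes>\<^sub>M dH) A = (\<integral>\<^sup>+y. emeasure dH (Pair y -` A) \<partial>distr M borel S)"
      by (rule dH.emeasure_pair_measure_alt) (metis A_sets sets_eq)
    also have "\<dots> = (\<integral>\<^sup>+\<omega>. emeasure dH (Pair (S \<omega>) -` A) \<partial>M)"
    proof (rule nn_integral_distr)
      show "S \<in> measurable M borel" by simp
      show "(\<lambda>y. emeasure dH (Pair y -` A)) \<in> borel_measurable (distr M borel S)"
        using dH.measurable_emeasure_Pair[of A "distr M borel S"] A_sets sets_eq by simp
    qed
    also have "\<dots> = (\<integral>\<^sup>+\<omega>. ennreal (FH (k * S \<omega> / Pj)) \<partial>M)"
    proof (rule nn_integral_cong_AE)
      show "AE \<omega> in M. emeasure dH (Pair (S \<omega>) -` A) = ennreal (FH (k * S \<omega> / Pj))"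
        using AES
      proof eventually_elim
        fix \<omega> assume S0: "S \<omega> > 0"
        have "Pair (S \<omega>) -` A = {..<k * S \<omega> / Pj}"
          using Pj c PI S0 by (auto simp: A_def k_def field_simps)
        then show "emeasure dH (Pair (S \<omega>) -` A) = ennreal (FH (k * S \<omega> / Pj))" by (simp add: FH_em)
      qed
    qed
    finally have "emeasure M {\<omega> \<in> space M. Pj * c * H \<omega> / (PI * S \<omega>) < gth} = (\<integral>\<^sup>+\<omega>. ennreal (FH (k * S \<omega> / Pj)) \<partial>M)" .
    then have "measure M {\<omega> \<in> space M. Pj * c * H \<omega> / (PI * S \<omega>) < gth} = enn2real (\<integral>\<^sup>+\<omega>. ennreal (FH (k * S \<omega> / Pj)) \<partial>M)"
      by (simp add: measure_def)
    also have "\<dots> = (\<integral>\<omega>. FH (k * S \<omega> / Pj) \<partial>M)"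
      by (rule integral_eq_nn_integral[symmetric]) (auto simp: FH_nonneg)
    finally show ?thesis .
  qed
  have mom: "has_bochner_integral M (\<lambda>\<omega>. S \<omega> powr a) V"
  proof (rule has_bochner_integral_nn_integral)
    show "(\<lambda>\<omega>. S \<omega> powr a) \<in> borel_measurable M" by measurable
    show "AE \<omega> in M. 0 \<le> S \<omega> powr a" by simp
    show "0 \<le> V" using V by simp
    have "(\<integral>\<^sup>+\<omega>. ennreal (S \<omega> powr a) \<partial>M) = (\<integral>\<^sup>+y. ennreal (erlang_density (N-1) (1/eta) y) * ennreal (y powr a) \<partial>lborel)"
      by (rule distributed_nn_integral[OF distS, symmetric]) measurable
    also have "\<dots> = ennreal V" unfolding V_def using erlang_moment_powr[of "1/eta" a N] eta a N by simp
    finally show "(\<integral>\<^sup>+\<omega>. ennreal (S \<omega> powr a) \<partial>M) = ennreal V" .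
  qed
  define f where "f = (\<lambda>\<omega>. C * k powr a * S \<omega> powr a)"
  have f_int: "integrable M f" unfolding f_def using mom
    by (intro integrable_mult_right) (auto simp: has_bochner_integral_iff)
  have f_integral: "integral\<^sup>L M f = L" unfolding f_def L_def using mom by (simp add: has_bochner_integral_iff)
  define s where "s = (\<lambda>Pj \<omega>. Pj powr a * FH (k * S \<omega> / Pj))"
  have lim0: "((\<lambda>z. FH z / z powr a) \<longlongrightarrow> C) (at_right 0)"
    by (rule sandwich_lim[OF FH_bounds exp_lim]) (use b al in auto)
  have lim_int: "((\<lambda>Pj. integral\<^sup>L M (s Pj)) \<longlongrightarrow> integral\<^sup>L M f) at_top"
  proof (rule integral_dominated_convergence_at_top[where w = f])
    show "f \<in> borel_measurable M" unfolding f_def by measurable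
    show "s Pj \<in> borel_measurable M" for Pj unfolding s_def by measurable
    show "integrable M f" by (rule f_int)
    show "AE \<omega> in M. ((\<lambda>Pj. s Pj \<omega>) \<longlongrightarrow> f \<omega>) at_top"
      using AES
    proof eventually_elim
      fix \<omega> assume S0: "S \<omega> > 0"
      define y where "y = k * S \<omega>"
      have y: "y > 0" using k S0 by (simp add: y_def)
      have "((\<lambda>Pj. FH (y / Pj) / (y / Pj) powr a) \<longlongrightarrow> C) at_top"
        by (rule filterlim_compose[OF lim0 lim_c_div[OF y]])
      then have "((\<lambda>Pj. y powr a * (FH (y / Pj) / (y / Pj) powr a)) \<longlongrightarrow> y powr a * C) at_top"
        by (intro tendsto_mult tendsto_const)
      moreover have "eventually (\<lambda>Pj. y powr a * (FH (y / Pj) / (y / Pj) powr a) = s Pj \<omega>) at_top"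
        using eventually_gt_at_top[of 0]
      proof eventually_elim
        fix Pj :: real assume "Pj > 0"
        then show "y powr a * (FH (y / Pj) / (y / Pj) powr a) = s Pj \<omega>"
          using y k S0 by (simp add: s_def y_def powr_divide field_simps)
      qed
      moreover have "y powr a * C = f \<omega>" using k S0 by (simp add: f_def y_def powr_mult)
      ultimately show "((\<lambda>Pj. s Pj \<omega>) \<longlongrightarrow> f \<omega>) at_top"
        using Lim_transform_eventually by metis
    qed
    show "\<forall>\<^sub>F Pj in at_top. AE \<omega> in M. norm (s Pj \<omega>) \<le> f \<omega>"
      using eventually_gt_at_top[of 0]
    proof eventually_elim
      fix Pj :: real assume Pj: "Pj > 0"
      show "AE \<omega> in M. norm (s Pj \<omega>) \<le> f \<omega>"
        using AES
      proof eventually_elim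
        fix \<omega> assume S0: "S \<omega> > 0"
        have z: "k * S \<omega> / Pj > 0" using k S0 Pj by simp
        have "FH (k * S \<omega> / Pj) \<le> C * (k * S \<omega> / Pj) powr a" using FH_bounds[OF z] by simp
        then have "Pj powr a * FH (k * S \<omega> / Pj) \<le> Pj powr a * (C * (k * S \<omega> / Pj) powr a)"
          by (rule mult_left_mono) simp
        also have "\<dots> = f \<omega>" using Pj k S0 by (simp add: f_def powr_divide powr_mult field_simps)
        finally show "norm (s Pj \<omega>) \<le> f \<omega>" using FH_nonneg[of "k * S \<omega> / Pj"] by (simp add: s_def)
      qed
    qed
  qed
  define Q where "Q = (\<lambda>Pj. measure M {\<omega> \<in> space M. Pj * c * H \<omega> / (PI * S \<omega>) < gth})"
  have limQ: "((\<lambda>Pj. Pj powr a * Q Pj) \<longlongrightarrow> L) at_top"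
  proof -
    have "eventually (\<lambda>Pj. integral\<^sup>L M (s Pj) = Pj powr a * Q Pj) at_top"
      using eventually_gt_at_top[of 0] by eventually_elim (simp add: Q_def Q_eq s_def)
    then show ?thesis using lim_int f_integral Lim_transform_eventually by metis
  qed
  define g where "g = (\<lambda>Pj. (gth * eta * PI) powr a / (mu * (Pj * c * b) powr a * Gamma (real N) * Gamma mu)
               * Gamma (a + real N))"
  have g_eq: "Pj powr a * g Pj = L" if Pj: "Pj > 0" for Pj
    using Pj b c eta gth PI k mu Gamma_real_pos[OF mu] Gamma_real_pos[of "real N"] N
    unfolding g_def L_def C_def V_def k_def
    by (simp add: powr_mult powr_divide field_simps add.commute)
  have "Q \<sim>[at_top] g"
  proof (rule asymp_equivI')
    have "((\<lambda>Pj. Pj powr a * Q Pj / L) \<longlongrightarrow> L / L) at_top"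
      by (intro tendsto_divide limQ tendsto_const) (use L in simp)
    then have "((\<lambda>Pj. Pj powr a * Q Pj / L) \<longlongrightarrow> 1) at_top" using L by simp
    moreover have "eventually (\<lambda>Pj. Pj powr a * Q Pj / L = Q Pj / g Pj) at_top"
      using eventually_gt_at_top[of 0]
    proof eventually_elim
      fix Pj :: real assume Pj: "Pj > 0"
      have gn: "g Pj \<noteq> 0" using g_eq[OF Pj] L by auto
      have "Pj powr a * Q Pj / L = Pj powr a * Q Pj / (Pj powr a * g Pj)" using g_eq[OF Pj] by simp
      also have "\<dots> = Q Pj / g Pj" using Pj gn by simp
      finally show "Pj powr a * Q Pj / L = Q Pj / g Pj" .
    qed
    ultimately show "((\<lambda>Pj. Q Pj / g Pj) \<longlongrightarrow> 1) at_top" using Lim_transform_eventually by metis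
  qed
  moreover have "\<And>\<omega>. (\<Sum>i=1..N. G i \<omega>) = S \<omega>" by (simp add: S_def)
  ultimately show ?thesis unfolding Q_def g_def a_def b_def c_def by simp
qed


end
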